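(* Let $g_y(\omega)=\frac{\sigma_\epsilon^2}{2\pi}|\kappa(e^{i\omega})|^2$ be the spectral density of an invertible ARMA process, i.e. $\sigma_\epsilon^2>0$ and $\kappa(z)=\eta(z)/\phi(z)$ where $\eta,\phi$ are polynomials with no common zeros, all of whose zeros lie in $\{|z|>1\}$, normalized so that $\kappa(0)=1$. For $\beta\in[0,1]$ and $\theta\in(-1,1)$ let $$f(\theta,\beta)=-\int_{-\pi}^{\pi}\frac{e^{i\omega}+\beta\theta}{|(1+\theta e^{i\omega})(1+\beta\theta e^{i\omega})|^2}\,g_y(\omega)\,d\omega .$$ Then for each $\beta\in[0,1]$ the set $\Theta_0^\beta=\{\theta\in(-1,1): f(\theta,\beta)=0\}$ is finite. *)

theory Defs
  imports "HOL-Analysis.Analysis" "HOL-Computational_Algebra.Polynomial"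
begin

definition arma_kappa :: "real poly \<Rightarrow> real poly \<Rightarrow> complex \<Rightarrow> complex" where
  "arma_kappa eta phi z = poly (map_poly complex_of_real eta) z / poly (map_poly complex_of_real phi) z"

definition arma_spec :: "real \<Rightarrow> real poly \<Rightarrow> real poly \<Rightarrow> real \<Rightarrow> real" where
  "arma_spec s2 eta phi \<omega> = s2 / (2 * pi) * (cmod (arma_kappa eta phi (cis \<omega>)))\<^sup>2"

definition invertible_arma :: "real \<Rightarrow> real poly \<Rightarrow> real poly \<Rightarrow> bool" where
  "invertible_arma s2 eta phi \<longleftrightarrow>
     s2 > 0 \<and>
     (\<forall>z. \<not> (poly (map_poly complex_of_real eta) z = 0 \<and> poly (map_poly complex_of_real phi) z = 0)) \<and>
     (\<forall>z. poly (map_poly complex_of_real eta) z = 0 \<longrightarrow> cmod z > 1) \<and>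
     (\<forall>z. poly (map_poly complex_of_real phi) z = 0 \<longrightarrow> cmod z > 1) \<and>
     arma_kappa eta phi 0 = 1"

definition f_crit :: "(real \<Rightarrow> real) \<Rightarrow> real \<Rightarrow> real \<Rightarrow> complex" where
  "f_crit g \<theta> \<beta> = - integral {-pi..pi}
     (\<lambda>\<omega>. (cis \<omega> + complex_of_real (\<beta> * \<theta>)) /
           complex_of_real ((cmod ((1 + complex_of_real \<theta> * cis \<omega>) * (1 + complex_of_real (\<beta> * \<theta>) * cis \<omega>)))\<^sup>2)
           * complex_of_real (g \<omega>))"

end

theory Submission
  imports Defs "HOL-Complex_Analysis.Complex_Analysis"
begin

abbreviation "cpath \<rho> \<equiv> part_circlepath 0 \<rho> (-pi) pi"

lemma exp_mipi[simp]: "exp (- (\<i> * complex_of_real pi)) = -1"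
  by (metis exp_minus exp_pi_i' inverse_minus_eq inverse_1)

lemma cpath_loop[simp]: "pathfinish (cpath \<rho>) = pathstart (cpath \<rho>)"
  by (simp add: exp_mipi exp_pi_i')

lemma cpath_image: "\<rho> \<ge> 0 \<Longrightarrow> path_image (cpath \<rho>) \<subseteq> sphere 0 \<rho>"
  by (rule path_image_part_circlepath_subset) auto

lemma cpath_wn0: assumes "\<rho> > 0" shows "winding_number (cpath \<rho>) 0 = 1"
proof -
  have nz: "0 \<notin> path_image (cpath \<rho>)" using cpath_image[of \<rho>] assms by auto
  have "((\<lambda>t. \<i>) has_integral (2 * complex_of_real pi * \<i>)) {-pi..pi}"
    using has_integral_const_real[of "\<i>" "-pi" pi] by (simp add: algebra_simps scaleR_conv_of_real)
  then have "((\<lambda>t. 1 / (0 + complex_of_real \<rho> * cis t - 0) * complex_of_real \<rho> * \<i> * cis t) has_integral 2 * complex_of_real pi * \<i>) {- pi..pi}"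
    by (rule has_integral_eq[rotated]) (use assms in \<open>auto simp: field_simps\<close>)
  then have "((\<lambda>w. 1/(w - 0)) has_contour_integral (2*pi*\<i>)) (cpath \<rho>)"
    by (subst has_contour_integral_part_circlepath_iff) auto
  then show ?thesis
    using winding_number_valid_path[OF valid_path_part_circlepath nz]
    by (simp add: contour_integral_unique)
qed

lemma cpath_wn_in: assumes "cmod w < \<rho>" shows "winding_number (cpath \<rho>) w = 1"
proof -
  have r: "\<rho> > 0" using assms norm_ge_zero le_less_trans by blast
  have "winding_number (cpath \<rho>) w = winding_number (cpath \<rho>) 0"
  proof (rule winding_number_around_inside [where S = "cball 0 (cmod w)"])
    show "winding_number (cpath \<rho>) 0 \<noteq> 0" using cpath_wn0[OF r] by simp
    show "cball 0 (cmod w) \<inter> path_image (cpath \<rho>) = {}"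
      using cpath_image[of \<rho>] r assms by fastforce
  qed (auto simp: cpath_loop)
  then show ?thesis using cpath_wn0[OF r] by simp
qed

lemma cpath_wn_out: assumes "cmod w > \<rho>" "\<rho> \<ge> 0" shows "winding_number (cpath \<rho>) w = 0"
  by (rule winding_number_zero_outside[of _ "cball 0 \<rho>"])
     (use cpath_image[of \<rho>] assms in \<open>auto simp: cpath_loop\<close>)

lemma roots_bound:
  fixes p :: "complex poly"
  assumes "p \<noteq> 0" "\<forall>z. poly p z = 0 \<longrightarrow> cmod z > 1"
  shows "\<exists>m>1. \<forall>z. poly p z = 0 \<longrightarrow> m \<le> cmod z"
proof -
  define R where "R = {z. poly p z = 0}"
  have fin: "finite R" using poly_roots_finite[OF assms(1)] by (simp add: R_def)
  define m where "m = Min (insert 2 (norm ` R))"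
  have "m > 1" unfolding m_def using fin assms(2) by (auto simp: Min_gr_iff R_def)
  moreover have "\<forall>z. poly p z = 0 \<longrightarrow> m \<le> cmod z"
    unfolding m_def using fin by (auto simp: R_def intro!: Min_le)
  ultimately show ?thesis by blast
qed


context
  fixes G :: "complex \<Rightarrow> complex" and B :: "complex set" and r m \<beta> :: real
  assumes r: "0 < r" "r < 1" and m: "1 < m" and B: "finite B" "B \<subseteq> cball 0 r"
    and Gh: "G holomorphic_on ball 0 m - B" and beta: "0 \<le> \<beta>" "\<beta> \<le> 1"
begin

definition hh :: "complex \<Rightarrow> complex \<Rightarrow> complex" where
  "hh \<theta> z = z * G z / ((1 + \<theta>*z) * (1 + of_real \<beta>*\<theta>*z) * (z + \<theta>))"

definition NN :: "complex \<Rightarrow> complex \<Rightarrow> complex" where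
  "NN \<theta> z = z * G z / ((1 + \<theta>*z) * (1 + of_real \<beta>*\<theta>*z))"

lemma hh_NN: "hh \<theta> = (\<lambda>w. NN \<theta> w / (w - (-\<theta>)))"
  by (auto simp: hh_def NN_def fun_eq_iff)

lemma nz1: "cmod \<theta> * cmod z < 1 \<Longrightarrow> 1 + \<theta> * z \<noteq> 0"
proof
  assume "cmod \<theta> * cmod z < 1" "1 + \<theta> * z = 0"
  then have "\<theta> * z = -1" by (simp add: add_eq_0_iff)
  then have "cmod (\<theta> * z) = 1" by simp
  then show False using \<open>cmod \<theta> * cmod z < 1\<close> by (simp add: norm_mult)
qed

lemma nz2: "cmod \<theta> * cmod z < 1 \<Longrightarrow> 1 + complex_of_real \<beta> * \<theta> * z \<noteq> 0"
proof -
  assume a: "cmod \<theta> * cmod z < 1"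
  have "cmod (complex_of_real \<beta> * \<theta>) * cmod z \<le> cmod \<theta> * cmod z"
    using beta by (auto simp: norm_mult intro!: mult_right_mono mult_left_le_one_le)
  then show ?thesis using nz1[of "complex_of_real \<beta> * \<theta>" z] a by (simp add: mult.assoc)
qed

lemma res_thm:
  fixes \<theta> :: complex and \<rho> :: real
  assumes th: "r < cmod \<theta>" "cmod \<theta> < 1" and rho: "r < \<rho>" "\<rho> \<le> 1" "\<rho> \<noteq> cmod \<theta>"
  shows "contour_integral (cpath \<rho>) (hh \<theta>) =
     2 * pi * \<i> * ((if cmod \<theta> < \<rho> then 1 else 0) * NN \<theta> (-\<theta>) + (\<Sum>p\<in>B. residue (hh \<theta>) p))"
proof -
  define R where "R = min m (1 / cmod \<theta>)"
  have tp: "cmod \<theta> > 0" using th r by linarith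
  have R1: "1 < R" using m th tp by (auto simp: R_def field_simps)
  have thR: "cmod \<theta> * R \<le> 1" using th by (auto simp: R_def field_simps min_def)
  have nB: "-\<theta> \<notin> B" using B th by auto
  have hol: "hh \<theta> holomorphic_on ball 0 R - insert (-\<theta>) B"
  proof -
    have Gh': "G holomorphic_on ball 0 R - insert (-\<theta>) B"
      by (rule holomorphic_on_subset[OF Gh]) (auto simp: R_def)
    moreover have "cmod \<theta> * cmod z < 1" if "z \<in> ball 0 R" for z
    proof -
      have "cmod \<theta> * cmod z \<le> cmod \<theta> * R" using that by (auto intro!: mult_left_mono)
      moreover have "cmod \<theta> * cmod z < cmod \<theta> * R \<or> \<theta> = 0"
        using that by auto
      ultimately show ?thesis using thR by auto
    qed
    ultimately show ?thesis unfolding hh_def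
    proof (intro holomorphic_intros)
      fix z assume z: "z \<in> ball 0 R - insert (-\<theta>) B"
      have "z + \<theta> \<noteq> 0"
      proof
        assume "z + \<theta> = 0"
        then have "z = -\<theta>" by (simp add: eq_neg_iff_add_eq_0)
        with z show False by auto
      qed
      moreover have "cmod \<theta> * cmod z < 1" using z \<open>\<And>z. z \<in> ball 0 R \<Longrightarrow> _\<close> by blast
      ultimately show "(1 + \<theta> * z) * (1 + complex_of_real \<beta> * \<theta> * z) * (z + \<theta>) \<noteq> 0"
        using nz1 nz2 by auto
    qed (use Gh' in simp_all)
  qed
  have "contour_integral (cpath \<rho>) (hh \<theta>) =
      2 * pi * \<i> * (\<Sum>p\<in>insert (-\<theta>) B. winding_number (cpath \<rho>) p * residue (hh \<theta>) p)"
  proof (rule Residue_theorem)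
    show "path_image (cpath \<rho>) \<subseteq> ball 0 R - insert (- \<theta>) B"
    proof
      fix z assume z: "z \<in> path_image (cpath \<rho>)"
      then have "cmod z = \<rho>" using cpath_image[of \<rho>] rho r by auto
      then show "z \<in> ball 0 R - insert (- \<theta>) B"
        using rho R1 B th by auto
    qed
    show "\<forall>z. z \<notin> ball 0 R \<longrightarrow> winding_number (cpath \<rho>) z = 0"
      using cpath_wn_out rho R1 r by auto
  qed (use hol B in auto)
  also have "\<dots> = 2 * pi * \<i> * (winding_number (cpath \<rho>) (-\<theta>) * residue (hh \<theta>) (-\<theta>) + (\<Sum>p\<in>B. residue (hh \<theta>) p))"
  proof -
    have "winding_number (cpath \<rho>) p = 1" if "p \<in> B" for p
      using B that rho by (intro cpath_wn_in) auto
    then show ?thesis using B nB by (simp add: sum.insert)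
  qed
  also have "winding_number (cpath \<rho>) (-\<theta>) = (if cmod \<theta> < \<rho> then 1 else 0)"
    using cpath_wn_in[of "-\<theta>" \<rho>] cpath_wn_out[of \<rho> "-\<theta>"] rho r by auto
  also have "residue (hh \<theta>) (-\<theta>) = NN \<theta> (-\<theta>)"
  proof -
    have op: "open (ball 0 R - B)" using B by (auto intro: open_Diff finite_imp_closed)
    have "cmod \<theta> * cmod z < 1" if "z \<in> ball 0 R" for z
    proof -
      have "cmod \<theta> * cmod z \<le> cmod \<theta> * R" using that by (auto intro!: mult_left_mono)
      moreover have "cmod \<theta> * cmod z < cmod \<theta> * R \<or> \<theta> = 0"
        using that by auto
      ultimately show ?thesis using thR by auto
    qed
    moreover have "G holomorphic_on ball 0 R - B"
      by (rule holomorphic_on_subset[OF Gh]) (auto simp: R_def)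
    ultimately have "NN \<theta> holomorphic_on ball 0 R - B" unfolding NN_def
      by (intro holomorphic_intros) (auto simp: nz1 nz2)
    moreover have "-\<theta> \<in> ball 0 R - B" using nB R1 th by auto
    ultimately show ?thesis unfolding hh_NN using residue_simple[OF op] by blast
  qed
  finally show ?thesis .
qed


lemma G_cont: "r < \<rho> \<Longrightarrow> \<rho> < m \<Longrightarrow> continuous_on (sphere 0 \<rho>) G"
  by (rule holomorphic_on_imp_continuous_on, rule holomorphic_on_subset[OF Gh]) (use B in auto)

lemma G_cis_cont [continuous_intros]:
  assumes "continuous_on S f" "r < \<rho>" "\<rho> < m"
  shows "continuous_on S (\<lambda>x. G (of_real \<rho> * cis (f x)))"
proof (rule continuous_on_compose2[OF G_cont[OF assms(2,3)]])
  show "continuous_on S (\<lambda>x. of_real \<rho> * cis (f x))" using assms by (intro continuous_intros)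
  show "(\<lambda>x. of_real \<rho> * cis (f x)) ` S \<subseteq> sphere 0 \<rho>" using assms r by (auto simp: norm_mult)
qed

lemma cint: "contour_integral (cpath \<rho>) (hh \<theta>) =
   \<i> * integral {-pi..pi} (\<lambda>t. hh \<theta> (of_real \<rho> * cis t) * of_real \<rho> * cis t)"
proof -
  have "contour_integral (cpath \<rho>) (hh \<theta>) =
     integral {-pi..pi} (\<lambda>t. hh \<theta> (0 + of_real \<rho> * cis t) * of_real \<rho> * \<i> * cis t)"
    by (rule contour_integral_part_circlepath_eq) simp
  also have "\<dots> = integral {-pi..pi} (\<lambda>t. \<i> * (hh \<theta> (of_real \<rho> * cis t) * of_real \<rho> * cis t))"
    by (simp add: algebra_simps)
  finally show ?thesis by simp
qed

definition Psi :: "complex \<Rightarrow> complex" where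
  "Psi \<theta> = integral {-pi..pi} (\<lambda>t. hh \<theta> (of_real 1 * cis t) * of_real 1 * cis t)"

definition Phi :: "complex \<Rightarrow> complex" where
  "Phi \<theta> = integral {-pi..pi} (\<lambda>t. hh \<theta> (of_real ((1+r)/2) * cis t) * of_real ((1+r)/2) * cis t)"

lemma Psi_Phi:
  assumes th: "(1+r)/2 < cmod \<theta>" "cmod \<theta> < 1"
  shows "Psi \<theta> - Phi \<theta> = 2 * pi * NN \<theta> (-\<theta>)"
proof -
  have a: "\<i> * Psi \<theta> = 2 * pi * \<i> * (NN \<theta> (-\<theta>) + (\<Sum>p\<in>B. residue (hh \<theta>) p))"
    using res_thm[of \<theta> 1] th r cint[of 1 \<theta>] by (simp add: Psi_def)
  have b: "\<i> * Phi \<theta> = 2 * pi * \<i> * ((\<Sum>p\<in>B. residue (hh \<theta>) p))"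
    using res_thm[of \<theta> "(1+r)/2"] th r cint[of "(1+r)/2" \<theta>] by (simp add: Phi_def)
  have "\<i> * (Psi \<theta> - Phi \<theta>) = \<i> * (2 * pi * NN \<theta> (-\<theta>))"
    using a b by (simp add: algebra_simps)
  then show ?thesis by simp
qed


definition DD :: "complex \<Rightarrow> complex \<Rightarrow> complex" where
  "DD x z = (1 + x*z) * (1 + of_real \<beta>*x*z) * (z + x)"

definition DDp :: "complex \<Rightarrow> complex \<Rightarrow> complex" where
  "DDp x z = z * (1 + of_real \<beta>*x*z) * (z + x) + of_real \<beta> * z * (1 + x*z) * (z + x) + (1 + x*z) * (1 + of_real \<beta>*x*z)"

lemma DD_deriv: "((\<lambda>x. DD x z) has_field_derivative DDp x z) (at x within S)"
  unfolding DD_def DDp_def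
  by (rule derivative_eq_intros refl)+ (simp add: algebra_simps)

lemma DD_nz: "cmod x < 1 \<Longrightarrow> cmod z = 1 \<Longrightarrow> DD x z \<noteq> 0"
proof -
  assume a: "cmod x < 1" "cmod z = 1"
  have "z + x \<noteq> 0"
  proof
    assume "z + x = 0" then have "x = -z" by (simp add: add_eq_0_iff)
    then show False using a by simp
  qed
  then show ?thesis unfolding DD_def using nz1[of x z] nz2[of x z] a by auto
qed

lemma DD_div_deriv: assumes nz: "DD x (cis t) \<noteq> 0" shows "((\<lambda>x. cis t * cis t * G (cis t) / DD x (cis t)) has_field_derivative
      - (cis t * cis t * G (cis t)) * DDp x (cis t) / (DD x (cis t))\<^sup>2) (at x within ball 0 1)"
  apply (rule derivative_eq_intros DD_deriv refl)+
  using nz apply simp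
  apply (simp add: power2_eq_square)
  done

lemma DD_cont [continuous_intros]: "continuous_on S f \<Longrightarrow> continuous_on S g \<Longrightarrow> continuous_on S (\<lambda>p. DD (f p) (g p))"
  unfolding DD_def by (intro continuous_intros)

lemma DDp_cont [continuous_intros]: "continuous_on S f \<Longrightarrow> continuous_on S g \<Longrightarrow> continuous_on S (\<lambda>p. DDp (f p) (g p))"
  unfolding DDp_def by (intro continuous_intros)

lemma Psi_eq: "Psi = (\<lambda>x. integral (cbox (-pi) pi) (\<lambda>t. cis t * cis t * G (cis t) / DD x (cis t)))"
  by (auto simp: Psi_def hh_def DD_def fun_eq_iff interval_cbox[symmetric] intro!: integral_cong)

lemma Psi_holo: "Psi holomorphic_on ball 0 1"
  unfolding Psi_eq
proof (rule leibniz_rule_holomorphic[where fx = "\<lambda>x t. - (cis t * cis t * G (cis t)) * DDp x (cis t) / (DD x (cis t))^2"])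
  fix x t assume x: "x \<in> ball (0::complex) 1" and t: "t \<in> cbox (-pi) pi"
  have nz: "DD x (cis t) \<noteq> 0" using DD_nz x by auto
  show "((\<lambda>x. cis t * cis t * G (cis t) / DD x (cis t)) has_field_derivative
      - (cis t * cis t * G (cis t)) * DDp x (cis t) / (DD x (cis t))\<^sup>2) (at x within ball 0 1)"
    by (rule DD_div_deriv[OF nz])
next
  fix x assume x: "x \<in> ball (0::complex) 1"
  have "continuous_on {-pi..pi} (\<lambda>t. cis t * cis t * G (of_real 1 * cis t) / DD x (cis t))"
    using x r m DD_nz[of x] by (intro continuous_intros) auto
  then show "(\<lambda>t. cis t * cis t * G (cis t) / DD x (cis t)) integrable_on cbox (- pi) pi"
    by (simp add: interval_cbox[symmetric] integrable_continuous_interval)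
next
  have "continuous_on (ball 0 1 \<times> cbox (- pi) pi)
     (\<lambda>p. - (cis (snd p) * cis (snd p) * G (of_real 1 * cis (snd p))) * DDp (fst p) (cis (snd p)) / (DD (fst p) (cis (snd p)))\<^sup>2)"
    using r m DD_nz by (intro continuous_intros) auto
  then show "continuous_on (ball 0 1 \<times> cbox (- pi) pi)
     (\<lambda>(x, t). - (cis t * cis t * G (cis t)) * DDp x (cis t) / (DD x (cis t))\<^sup>2)"
    by (simp add: case_prod_beta')
qed simp


lemma DD_nz2: "cmod x * cmod z < 1 \<Longrightarrow> cmod z \<noteq> cmod x \<Longrightarrow> DD x z \<noteq> 0"
proof -
  assume a: "cmod x * cmod z < 1" "cmod z \<noteq> cmod x"
  have "z + x \<noteq> 0"
  proof
    assume "z + x = 0" then have "x = -z" by (simp add: add_eq_0_iff)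
    then show False using a by simp
  qed
  then show ?thesis unfolding DD_def using nz1[of x z] nz2[of x z] a by (auto simp: mult.commute)
qed

lemma Phi_cont: "continuous_on {x::real. (1+r)/2 < \<bar>x\<bar> \<and> \<bar>x\<bar> \<le> 1} (\<lambda>x. Phi (of_real x))"
proof -
  define s where "s = (1+r)/2"
  have s: "r < s" "s < 1" "s < m" using r m by (auto simp: s_def)
  let ?U = "{x::real. s < \<bar>x\<bar> \<and> \<bar>x\<bar> \<le> 1}"
  have eq: "(\<lambda>x. Phi (of_real x)) = (\<lambda>x. integral (cbox (-pi) pi)
      (\<lambda>t. of_real s * cis t * G (of_real s * cis t) * of_real s * cis t / DD (of_real x) (of_real s * cis t)))"
    by (auto simp: Phi_def hh_def DD_def s_def fun_eq_iff interval_cbox[symmetric] intro!: integral_cong)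
  have nz: "DD (of_real (fst p)) (of_real s * cis (snd p)) \<noteq> 0" if "p \<in> ?U \<times> cbox (-pi) pi" for p
  proof (rule DD_nz2)
    show "cmod (complex_of_real (fst p)) * cmod (complex_of_real s * cis (snd p)) < 1"
      using that s r by (auto simp: norm_mult intro: le_less_trans[OF mult_right_mono[of _ 1]])
    show "cmod (complex_of_real s * cis (snd p)) \<noteq> cmod (complex_of_real (fst p))"
      using that s r by (auto simp: norm_mult)
  qed
  have "continuous_on (?U \<times> cbox (-pi) pi) (\<lambda>p. of_real s * cis (snd p) * G (of_real s * cis (snd p)) * of_real s * cis (snd p) / DD (of_real (fst p)) (of_real s * cis (snd p)))"
    using s nz by (intro continuous_intros) auto
  then have "continuous_on ?U (\<lambda>x. integral (cbox (-pi) pi)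
      (\<lambda>t. of_real s * cis t * G (of_real s * cis t) * of_real s * cis t / DD (of_real x) (of_real s * cis t)))"
    by (intro integral_continuous_on_param) (simp add: case_prod_beta')
  then show ?thesis unfolding eq s_def .
qed


lemma Psi_W:
  fixes x :: real
  assumes "(1+r)/2 < \<bar>x\<bar>" "\<bar>x\<bar> < 1"
  shows "of_real ((1-x^2)*(1-\<beta>*x^2)) * Psi (of_real x) =
     of_real ((1-x^2)*(1-\<beta>*x^2)) * Phi (of_real x) - 2 * pi * x * G (- of_real x)"
proof -
  have e: "Psi (of_real x) = Phi (of_real x) + 2 * pi * NN (of_real x) (- of_real x)"
    using Psi_Phi[of "of_real x"] assms by (simp add: algebra_simps)
  have x2: "x^2 < 1" using assms by (simp add: abs_square_less_1)
  have "\<beta>*x^2 \<le> x^2" using beta by (simp add: mult_left_le_one_le)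
  then have D: "(1-x^2)*(1-\<beta>*x^2) \<noteq> 0" using x2 by auto
  have nn: "NN (of_real x) (- of_real x) = - of_real x * G (- of_real x) / of_real ((1-x^2)*(1-\<beta>*x^2))"
    unfolding NN_def by (simp add: algebra_simps power2_eq_square)
  have Dc: "(of_real ((1-x^2)*(1-\<beta>*x^2)) :: complex) \<noteq> 0" using D by (metis of_real_eq_0_iff)
  show ?thesis unfolding e nn using Dc by (simp add: field_simps)
qed

lemma finite_zeros:
  assumes G1: "G 1 \<noteq> 0" "G (-1) \<noteq> 0"
  shows "finite {\<theta>::real. \<theta> \<in> {-1<..<1} \<and> Psi (of_real \<theta>) = 0}"
proof -
  define s where "s = (1+r)/2"
  have s: "r < s" "s < 1" "0 < s" using r by (auto simp: s_def)
  define U where "U = {x::real. s < \<bar>x\<bar> \<and> \<bar>x\<bar> \<le> 1}"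
  define W where "W x = of_real ((1-x^2)*(1-\<beta>*x^2)) * Phi (of_real x) - 2 * pi * x * G (- of_real x)" for x :: real
  have Gc: "continuous_on U (\<lambda>x. G (- of_real x))"
  proof (rule continuous_on_compose2[of "ball 0 m - B" G])
    show "continuous_on (ball 0 m - B) G" using Gh holomorphic_on_imp_continuous_on by blast
    show "continuous_on U (\<lambda>x. - complex_of_real x)" by (intro continuous_intros)
    show "(\<lambda>x. - complex_of_real x) ` U \<subseteq> ball 0 m - B" using B m s by (force simp: U_def)
  qed
  have Wc: "continuous_on U W"
    unfolding W_def using Phi_cont Gc unfolding U_def s_def by (intro continuous_intros) auto
  have WU: "W x \<noteq> 0 \<Longrightarrow> x \<in> U \<Longrightarrow> \<bar>x\<bar> < 1 \<Longrightarrow> Psi (of_real x) \<noteq> 0" for x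
    using Psi_W[of x] by (auto simp: W_def U_def s_def)
  have "\<exists>d>0. \<forall>x\<in>U. dist x a < d \<longrightarrow> W x \<noteq> 0" if a: "a \<in> U" "W a \<noteq> 0" for a
  proof -
    obtain d where d: "d > 0" "\<forall>x\<in>U. dist x a < d \<longrightarrow> dist (W x) (W a) < cmod (W a)"
      using Wc a unfolding continuous_on_iff by (metis zero_less_norm_iff)
    show ?thesis
    proof (intro exI[of _ d] conjI ballI impI)
      fix x assume "x \<in> U" "dist x a < d"
      then have "dist (W x) (W a) < cmod (W a)" using d by auto
      then show "W x \<noteq> 0" by (auto simp: dist_norm)
    qed (use d in auto)
  qed
  moreover have "1 \<in> U" "-1 \<in> U" using s by (auto simp: U_def)
  moreover have "W 1 \<noteq> 0" "W (-1) \<noteq> 0" using G1 by (auto simp: W_def)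
  ultimately obtain d1 d2 where d1: "d1 > 0" "\<forall>x\<in>U. dist x 1 < d1 \<longrightarrow> W x \<noteq> 0"
      and d2: "d2 > 0" "\<forall>x\<in>U. dist x (-1) < d2 \<longrightarrow> W x \<noteq> 0" by meson
  define d where "d = min (min d1 d2) (1 - s)"
  have d: "d > 0" "d \<le> 1 - s" using d1 d2 s by (auto simp: d_def)
  have near: "Psi (of_real x) \<noteq> 0" if "1 - d < \<bar>x\<bar>" "\<bar>x\<bar> < 1" for x
  proof -
    have xU: "x \<in> U" using that d by (auto simp: U_def)
    have "W x \<noteq> 0"
    proof (cases "x \<ge> 0")
      case True then show ?thesis using d1 xU that by (auto simp: dist_real_def d_def)
    next
      case False then show ?thesis using d2 xU that by (auto simp: dist_real_def d_def)
    qed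
    then show ?thesis using WU xU that by auto
  qed
  let ?Z = "{\<theta>::real. \<theta> \<in> {-1<..<1} \<and> Psi (of_real \<theta>) = 0}"
  have sub: "of_real ` ?Z \<subseteq> {z \<in> cball 0 (1 - d). Psi z = 0}"
  proof
    fix z :: complex assume "z \<in> of_real ` ?Z"
    then obtain x where x: "z = of_real x" "-1 < x" "x < 1" "Psi (of_real x) = 0" by auto
    then have "\<bar>x\<bar> \<le> 1 - d" using near[of x] by force
    then show "z \<in> {z \<in> cball 0 (1 - d). Psi z = 0}" using x by auto
  qed
  have "finite {z \<in> cball 0 (1 - d). Psi z = 0}"
  proof (cases "Psi constant_on ball 0 1")
    case True
    then obtain c where c: "\<forall>z\<in>ball 0 1. Psi z = c" by (auto simp: constant_on_def)
    have "Psi (of_real (1 - d/2)) \<noteq> 0" using near[of "1 - d/2"] d s by auto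
    moreover have "cmod (complex_of_real (1 - d/2)) < 1" by (subst norm_of_real) (use d s in auto)
    then have "of_real (1 - d/2) \<in> ball (0::complex) 1" by (simp only: mem_ball dist_0_norm)
    ultimately have "c \<noteq> 0" using c by auto
    moreover have "cball 0 (1 - d) \<subseteq> ball (0::complex) 1" using d by auto
    ultimately have "{z \<in> cball 0 (1 - d). Psi z = 0} = {}" using c by auto
    then show ?thesis by (metis finite.emptyI)
  next
    case False
    show ?thesis
      by (rule holomorphic_compact_finite_zeros[OF Psi_holo]) (use False d in auto)
  qed
  then have "finite (of_real ` ?Z :: complex set)" using sub finite_subset by blast
  then show ?thesis by (rule finite_imageD) (auto simp: inj_on_def)
qed

end

lemma alg: fixes a b p q z X :: complex
  assumes "a \<noteq> 0" "b \<noteq> 0" "p \<noteq> 0" "q \<noteq> 0" "z \<noteq> 0"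
  shows "q / (a*b*(p/z)*(q/z)) * X = z * X / (a*b*p) * z"
  using assms by (simp add: field_simps)

lemma integrand_eq:
  fixes K :: "complex \<Rightarrow> complex" and \<theta> \<beta> c t :: real
  assumes Kc: "\<And>z. cnj (K z) = K (cnj z)" and th: "\<bar>\<theta>\<bar> < 1" and b: "0 \<le> \<beta>" "\<beta> \<le> 1"
  shows "(cis t + complex_of_real (\<beta>*\<theta>)) / complex_of_real ((cmod ((1 + complex_of_real \<theta> * cis t) * (1 + complex_of_real (\<beta>*\<theta>) * cis t)))\<^sup>2) * complex_of_real (c * (cmod (K (cis t)))\<^sup>2)
   = cis t * (of_real c * K (cis t) * K (1 / cis t)) / ((1 + of_real \<theta> * cis t) * (1 + of_real \<beta> * of_real \<theta> * cis t) * (cis t + of_real \<theta>)) * cis t"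
proof -
  define z where "z = cis t"
  have z1: "cmod z = 1" by (simp add: z_def)
  have z0: "z \<noteq> 0" by (simp add: z_def)
  have cz: "cnj z = 1 / z" by (simp add: z_def cis_cnj divide_inverse flip: cis_inverse)
  have bt: "\<bar>\<beta>*\<theta>\<bar> < 1" using th b by (auto simp: abs_mult intro: le_less_trans[OF mult_left_le_one_le])
  have nzA: "1 + of_real a * z \<noteq> 0" if "\<bar>a\<bar> < 1" for a :: real
  proof
    assume "1 + of_real a * z = 0"
    then have "of_real a * z = -1" by (simp add: add_eq_0_iff)
    then have "cmod (of_real a * z) = 1" by simp
    then show False using that z1 by (simp add: norm_mult)
  qed
  have nzB: "z + of_real a \<noteq> 0" if "\<bar>a\<bar> < 1" for a :: real
  proof
    assume "z + of_real a = 0"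
    then have "z = - of_real a" by (simp add: eq_neg_iff_add_eq_0)
    then show False using that z1 by simp
  qed
  have sq: "complex_of_real ((cmod w)\<^sup>2) = w * cnj w" for w by (rule complex_norm_square)
  have e1: "complex_of_real (c * (cmod (K z))\<^sup>2) = of_real c * (K z * K (1/z))"
    using sq[of "K z"] by (simp add: Kc cz)
  have e2: "complex_of_real ((cmod ((1 + complex_of_real \<theta> * z) * (1 + complex_of_real (\<beta>*\<theta>) * z)))\<^sup>2)
     = (1 + complex_of_real \<theta> * z) * (1 + complex_of_real (\<beta>*\<theta>) * z) * ((z + of_real \<theta>) / z) * ((z + of_real (\<beta>*\<theta>)) / z)"
    using sq[of "(1 + complex_of_real \<theta> * z) * (1 + complex_of_real (\<beta>*\<theta>) * z)"] z0
    by (simp add: cz field_simps)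
  have "(z + complex_of_real (\<beta>*\<theta>)) / complex_of_real ((cmod ((1 + complex_of_real \<theta> * z) * (1 + complex_of_real (\<beta>*\<theta>) * z)))\<^sup>2) * complex_of_real (c * (cmod (K z))\<^sup>2)
   = (z + complex_of_real (\<beta>*\<theta>)) / ((1 + complex_of_real \<theta> * z) * (1 + complex_of_real (\<beta>*\<theta>) * z) * ((z + of_real \<theta>) / z) * ((z + of_real (\<beta>*\<theta>)) / z)) * (of_real c * (K z * K (1/z)))"
    by (simp only: e1 e2)
  also have "\<dots> = z * (of_real c * (K z * K (1/z))) / ((1 + complex_of_real \<theta> * z) * (1 + complex_of_real (\<beta>*\<theta>) * z) * (z + of_real \<theta>)) * z"
    by (rule alg) (use z0 nzA[OF th] nzA[OF bt] nzB[OF th] nzB[OF bt] in auto)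
  also have "\<dots> = z * (of_real c * K z * K (1 / z)) / ((1 + of_real \<theta> * z) * (1 + of_real \<beta> * of_real \<theta> * z) * (z + of_real \<theta>)) * z"
    by (simp only: of_real_mult mult.assoc)
  finally have "(z + complex_of_real (\<beta>*\<theta>)) / complex_of_real ((cmod ((1 + complex_of_real \<theta> * z) * (1 + complex_of_real (\<beta>*\<theta>) * z)))\<^sup>2) * complex_of_real (c * (cmod (K z))\<^sup>2)
   = z * (of_real c * K z * K (1 / z)) / ((1 + of_real \<theta> * z) * (1 + of_real \<beta> * of_real \<theta> * z) * (z + of_real \<theta>)) * z" .
  then show ?thesis by (simp add: z_def)
qed


theorem proposition4p5:
  fixes s2 :: real and eta phi :: "real poly" and \<beta> :: real
  assumes "invertible_arma s2 eta phi"
    and "\<beta> \<in> {0..1}"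
  shows "finite {\<theta> \<in> {-1<..<1}. f_crit (arma_spec s2 eta phi) \<theta> \<beta> = 0}"
proof -
  define E where "E = map_poly complex_of_real eta"
  define P where "P = map_poly complex_of_real phi"
  from assms(1) have s2: "s2 > 0" and Er: "\<forall>z. poly E z = 0 \<longrightarrow> cmod z > 1"
    and Pr: "\<forall>z. poly P z = 0 \<longrightarrow> cmod z > 1"
    by (auto simp: invertible_arma_def E_def P_def)
  have b: "0 \<le> \<beta>" "\<beta> \<le> 1" using assms(2) by auto
  have P0: "P \<noteq> 0"
  proof
    assume "P = 0"
    then have "poly P 0 = 0" by simp
    then show False using Pr by fastforce
  qed
  have Pz0: "poly P 0 \<noteq> 0" using Pr by fastforce
  obtain m where m: "m > 1" "\<forall>z. poly P z = 0 \<longrightarrow> m \<le> cmod z" using roots_bound[OF P0 Pr] by blast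
  define r where "r = 1/m"
  have r: "0 < r" "r < 1" using m by (auto simp: r_def)
  define Q where "Q = {z. poly P (1/z) = 0}"
  define B where "B = insert 0 Q"
  have "Q \<subseteq> inverse ` {w. poly P w = 0}"
  proof
    fix z assume "z \<in> Q"
    then have "poly P (inverse z) = 0" by (simp add: Q_def divide_inverse)
    then show "z \<in> inverse ` {w. poly P w = 0}" by (auto intro!: image_eqI[of _ _ "inverse z"])
  qed
  then have finB: "finite B" unfolding B_def using poly_roots_finite[OF P0] finite_subset by blast
  have Bsub: "B \<subseteq> cball 0 r"
  proof
    fix z assume "z \<in> B"
    then consider "z = 0" | "poly P (1/z) = 0" by (auto simp: B_def Q_def)
    then show "z \<in> cball 0 r"
    proof cases
      case 1 then show ?thesis using r by simp
    next
      case 2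
      then have z0: "z \<noteq> 0" using Pz0 by auto
      have "m \<le> cmod (1/z)" using m 2 by blast
      then have "m * cmod z \<le> 1" using z0 by (simp add: norm_divide field_simps)
      then show ?thesis using m z0 by (simp add: r_def field_simps)
    qed
  qed
  define K where "K z = poly E z / poly P z" for z
  define c where "c = s2/(2*pi)"
  define G where "G z = of_real c * K z * K (1/z)" for z
  have Gh: "G holomorphic_on ball 0 m - B"
    unfolding G_def K_def
  proof (intro holomorphic_intros)
    fix z assume z: "z \<in> ball 0 m - B"
    then show "poly P z \<noteq> 0" using m by force
    show "z \<noteq> 0" using z by (auto simp: B_def)
    show "poly P (1/z) \<noteq> 0" using z by (auto simp: B_def Q_def)
  qed (auto simp: B_def)
  have E1: "poly E 1 \<noteq> 0" "poly E (-1) \<noteq> 0" "poly P 1 \<noteq> 0" "poly P (-1) \<noteq> 0"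
    using Er Pr by force+
  have c0: "c \<noteq> 0" using s2 by (simp add: c_def)
  have G1: "G 1 \<noteq> 0" "G (-1) \<noteq> 0" using E1 c0 by (auto simp: G_def K_def)
  have Kc: "cnj (K z) = K (cnj z)" for z
  proof -
    have "\<And>n. poly.coeff E n \<in> \<real>" "\<And>n. poly.coeff P n \<in> \<real>"
      by (auto simp: E_def P_def coeff_map_poly)
    then show ?thesis by (simp add: K_def poly_cnj_real)
  qed
  have eq: "f_crit (arma_spec s2 eta phi) \<theta> \<beta> = - Psi G \<beta> (of_real \<theta>)" if th: "\<bar>\<theta>\<bar> < 1" for \<theta>
  proof -
    have as: "arma_spec s2 eta phi t = c * (cmod (K (cis t)))\<^sup>2" for t
      by (simp add: arma_spec_def arma_kappa_def K_def E_def P_def c_def)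
    have pt: "(cis t + complex_of_real (\<beta> * \<theta>)) / complex_of_real ((cmod ((1 + complex_of_real \<theta> * cis t) * (1 + complex_of_real (\<beta> * \<theta>) * cis t)))\<^sup>2) * complex_of_real (arma_spec s2 eta phi t)
       = hh G \<beta> (of_real \<theta>) (of_real 1 * cis t) * of_real 1 * cis t" for t
    proof -
      have "(cis t + complex_of_real (\<beta> * \<theta>)) / complex_of_real ((cmod ((1 + complex_of_real \<theta> * cis t) * (1 + complex_of_real (\<beta> * \<theta>) * cis t)))\<^sup>2) * complex_of_real (arma_spec s2 eta phi t)
       = (cis t + complex_of_real (\<beta> * \<theta>)) / complex_of_real ((cmod ((1 + complex_of_real \<theta> * cis t) * (1 + complex_of_real (\<beta> * \<theta>) * cis t)))\<^sup>2) * complex_of_real (c * (cmod (K (cis t)))\<^sup>2)"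
        by (simp only: as)
      also have "\<dots> = cis t * (of_real c * K (cis t) * K (1 / cis t)) / ((1 + of_real \<theta> * cis t) * (1 + of_real \<beta> * of_real \<theta> * cis t) * (cis t + of_real \<theta>)) * cis t"
        by (rule integrand_eq[where K=K, OF Kc th b])
      also have "\<dots> = hh G \<beta> (of_real \<theta>) (of_real 1 * cis t) * of_real 1 * cis t"
        by (simp add: hh_def[OF r m(1) finB Bsub Gh b] G_def)
      finally show ?thesis .
    qed
    show ?thesis
      unfolding f_crit_def Psi_def[OF r m(1) finB Bsub Gh b] by (simp only: pt)
  qed
  have "{\<theta> \<in> {-1<..<1}. f_crit (arma_spec s2 eta phi) \<theta> \<beta> = 0} = {\<theta>::real. \<theta> \<in> {-1<..<1} \<and> Psi G \<beta> (of_real \<theta>) = 0}"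
    using eq by fastforce
  also have "finite \<dots>"
    by (rule finite_zeros[OF r m(1) finB Bsub Gh b G1])
  finally show ?thesis .
qed

end
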